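(* Let $D$ be any derivation of $\mathfrak{g}_1\underline{\times}\mathfrak{g}_2$, and write $D_{ij}=p_iDp_j$. Then: (1) for $i=1,2$, the restriction of $D_{ii}$ to $\mathfrak{g}_i$ is a derivation of $\mathfrak{g}_i$; (2) $D_{21}(C^1\mathfrak{g}_1)=D_{12}(C^1\mathfrak{g}_2)=0$; (3) $D_{i3}(\mathfrak{g}_3)\subset Z(\mathfrak{g}_i)$ for $i=1,2$; (4) $D_{12}(\mathfrak{g}_2)\subset T_1$ and $D_{21}(\mathfrak{g}_1)\subset T_2$, where $T_i=\{Y\in\mathfrak{g}_i : [Y,\mathfrak{g}_i]\subset Z(\mathfrak{g}_i)\}$ for $i=1,2$.
   Context: All Lie algebras are finite-dimensional, complex, nilpotent and nonabelian. $C^1\mathfrak{g}=[\mathfrak{g},\mathfrak{g}]$; $Z(\mathfrak{g})$ is the center. Product by generators: for $\mathfrak{g}_1,\mathfrak{g}_2$ of dimensions $m_1,m_2$ take bases $\{X_1,\dots,X_{m_1}\}$, $\{X'_1,\dots,X'_{m_2}\}$ such that $X_1,\dots,X_{n_1}$ generate $\mathfrak{g}_1$ and $X_{n_1+1},\dots,X_{m_1}$ span $C^1\mathfrak{g}_1$, and similarly for $\mathfrak{g}_2$ with $n_2$ generators. $\mathfrak{g}_1\underline{\times}\mathfrak{g}_2$ is the Lie algebra on $\mathfrak{g}_1\oplus\mathfrak{g}_2\oplus\mathfrak{g}_3$, $\mathfrak{g}_3=\langle Z_1,\dots,Z_{n_1n_2}\rangle$, with the brackets of $\mathfrak{g}_1$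 and of $\mathfrak{g}_2$, $[X_i,X'_j]=Z_{(i-1)n_2+j}$ for $i\le n_1$, $j\le n_2$, $[X_i,X'_j]=0$ otherwise, and $\mathfrak{g}_3$ central. $p_i$ ($i=1,2,3$) is the projection of $\mathfrak{g}_1\oplus\mathfrak{g}_2\oplus\mathfrak{g}_3$ onto $\mathfrak{g}_i$. *)

theory Defs
  imports Complex_Main
begin

text \<open>A complex Lie algebra of dimension m is represented on the
carrier vec m = vectors nat => complex supported on {0..<m}; the standard basis
vector e i (i < m) plays the role of the basis element X_(i+1).\<close>

type_synonym cvec = "nat \<Rightarrow> complex"
type_synonym bracket = "cvec \<Rightarrow> cvec \<Rightarrow> cvec"

definition vzero :: cvec where "vzero = (\<lambda>_. 0)"
definition vadd :: "cvec \<Rightarrow> cvec \<Rightarrow> cvec" where "vadd x y = (\<lambda>i. x i + y i)"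
definition scal :: "complex \<Rightarrow> cvec \<Rightarrow> cvec" where "scal c x = (\<lambda>i. c * x i)"
definition ebas :: "nat \<Rightarrow> cvec" where "ebas j = (\<lambda>i. if i = j then 1 else 0)"

definition vec :: "nat \<Rightarrow> cvec set" where "vec m = {x. \<forall>i\<ge>m. x i = 0}"

inductive_set cspan :: "cvec set \<Rightarrow> cvec set" for S where
  cspan_zero: "vzero \<in> cspan S"
| cspan_step: "s \<in> S \<Longrightarrow> v \<in> cspan S \<Longrightarrow> vadd (scal c s) v \<in> cspan S"

definition lie_alg :: "nat \<Rightarrow> bracket \<Rightarrow> bool" where
  "lie_alg m br \<longleftrightarrow>
     (\<forall>x\<in>vec m. \<forall>y\<in>vec m. br x y \<in> vec m) \<and>
     (\<forall>x\<in>vec m. \<forall>y\<in>vec m. \<forall>z\<in>vec m. br (vadd x y) z = vadd (br x z) (br y z)) \<and>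
     (\<forall>x\<in>vec m. \<forall>y\<in>vec m. \<forall>z\<in>vec m. br z (vadd x y) = vadd (br z x) (br z y)) \<and>
     (\<forall>c x y. x \<in> vec m \<longrightarrow> y \<in> vec m \<longrightarrow> br (scal c x) y = scal c (br x y)) \<and>
     (\<forall>c x y. x \<in> vec m \<longrightarrow> y \<in> vec m \<longrightarrow> br y (scal c x) = scal c (br y x)) \<and>
     (\<forall>x\<in>vec m. br x x = vzero) \<and>
     (\<forall>x\<in>vec m. \<forall>y\<in>vec m. \<forall>z\<in>vec m.
        vadd (br x (br y z)) (vadd (br y (br z x)) (br z (br x y))) = vzero)"

definition derived :: "nat \<Rightarrow> bracket \<Rightarrow> cvec set" where
  "derived m br = cspan {br x y | x y. x \<in> vec m \<and> y \<in> vec m}"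

fun lcs :: "nat \<Rightarrow> bracket \<Rightarrow> nat \<Rightarrow> cvec set" where
  "lcs m br 0 = vec m"
| "lcs m br (Suc k) = cspan {br x y | x y. x \<in> vec m \<and> y \<in> lcs m br k}"

definition center :: "nat \<Rightarrow> bracket \<Rightarrow> cvec set" where
  "center m br = {x \<in> vec m. \<forall>y\<in>vec m. br x y = vzero}"

definition nilpotent_lie :: "nat \<Rightarrow> bracket \<Rightarrow> bool" where
  "nilpotent_lie m br \<longleftrightarrow> lie_alg m br \<and> (\<exists>k. lcs m br k = {vzero})"

definition nonabelian :: "nat \<Rightarrow> bracket \<Rightarrow> bool" where
  "nonabelian m br \<longleftrightarrow> (\<exists>x\<in>vec m. \<exists>y\<in>vec m. br x y \<noteq> vzero)"

inductive_set gen_sub :: "bracket \<Rightarrow> cvec set \<Rightarrow> cvec set" for br S where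
  gen_base: "s \<in> S \<Longrightarrow> s \<in> gen_sub br S"
| gen_zero: "vzero \<in> gen_sub br S"
| gen_add: "x \<in> gen_sub br S \<Longrightarrow> y \<in> gen_sub br S \<Longrightarrow> vadd x y \<in> gen_sub br S"
| gen_scal: "x \<in> gen_sub br S \<Longrightarrow> scal c x \<in> gen_sub br S"
| gen_br: "x \<in> gen_sub br S \<Longrightarrow> y \<in> gen_sub br S \<Longrightarrow> br x y \<in> gen_sub br S"

definition adapted :: "nat \<Rightarrow> bracket \<Rightarrow> nat \<Rightarrow> bool" where
  "adapted m br n \<longleftrightarrow> n \<le> m \<and>
     gen_sub br (ebas ` {..<n}) = vec m \<and>
     cspan (ebas ` {n..<m}) = derived m br"

definition lie_der :: "nat \<Rightarrow> bracket \<Rightarrow> (cvec \<Rightarrow> cvec) \<Rightarrow> bool" where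
  "lie_der m br D \<longleftrightarrow>
     (\<forall>x\<in>vec m. D x \<in> vec m) \<and>
     (\<forall>x\<in>vec m. \<forall>y\<in>vec m. D (vadd x y) = vadd (D x) (D y)) \<and>
     (\<forall>c x. x \<in> vec m \<longrightarrow> D (scal c x) = scal c (D x)) \<and>
     (\<forall>x\<in>vec m. \<forall>y\<in>vec m. D (br x y) = vadd (br (D x) y) (br x (D y)))"

text \<open>Product by generators g1 x_ g2 on vec (m1 + m2 + n1*n2): coordinates 0..<m1 are g1,
m1..<m1+m2 are g2 (X'_(j+1) = e_(m1+j)), and m1+m2+k are g3 (Z_(k+1)).
[X_i, X'_j] = Z_((i-1) n2 + j) (1-based) becomes index i*n2+j (0-based).\<close>

definition emb1 :: "nat \<Rightarrow> cvec \<Rightarrow> cvec" where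
  "emb1 m1 y = (\<lambda>k. if k < m1 then y k else 0)"
definition res1 :: "nat \<Rightarrow> cvec \<Rightarrow> cvec" where
  "res1 m1 x = (\<lambda>k. if k < m1 then x k else 0)"
definition emb2 :: "nat \<Rightarrow> nat \<Rightarrow> cvec \<Rightarrow> cvec" where
  "emb2 m1 m2 y = (\<lambda>k. if m1 \<le> k \<and> k < m1 + m2 then y (k - m1) else 0)"
definition res2 :: "nat \<Rightarrow> nat \<Rightarrow> cvec \<Rightarrow> cvec" where
  "res2 m1 m2 x = (\<lambda>k. if k < m2 then x (m1 + k) else 0)"

definition prod_gen :: "nat \<Rightarrow> nat \<Rightarrow> bracket \<Rightarrow> nat \<Rightarrow> nat \<Rightarrow> bracket \<Rightarrow> bracket" where
  "prod_gen m1 n1 br1 m2 n2 br2 x y =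
     vadd (emb1 m1 (br1 (res1 m1 x) (res1 m1 y)))
      (vadd (emb2 m1 m2 (br2 (res2 m1 m2 x) (res2 m1 m2 y)))
        (\<lambda>k. if m1 + m2 \<le> k \<and> k < m1 + m2 + n1 * n2 then
               (let t = k - (m1 + m2); i = t div n2; j = t mod n2 in
                  x i * y (m1 + j) - y i * x (m1 + j))
             else 0))"

definition proj1 :: "nat \<Rightarrow> cvec \<Rightarrow> cvec" where
  "proj1 m1 x = (\<lambda>k. if k < m1 then x k else 0)"
definition proj2 :: "nat \<Rightarrow> nat \<Rightarrow> cvec \<Rightarrow> cvec" where
  "proj2 m1 m2 x = (\<lambda>k. if m1 \<le> k \<and> k < m1 + m2 then x k else 0)"
definition proj3 :: "nat \<Rightarrow> nat \<Rightarrow> nat \<Rightarrow> cvec \<Rightarrow> cvec" where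
  "proj3 m1 m2 N x = (\<lambda>k. if m1 + m2 \<le> k \<and> k < N then x k else 0)"

definition Tset :: "nat \<Rightarrow> bracket \<Rightarrow> cvec set" where
  "Tset m br = {y \<in> vec m. \<forall>x\<in>vec m. br y x \<in> center m br}"

end

theory Submission
  imports Defs
begin

lemma la_zero_l: "lie_alg m br \<Longrightarrow> y \<in> vec m \<Longrightarrow> br vzero y = vzero"
proof -
  assume a: "lie_alg m br" "y \<in> vec m"
  have z: "vzero \<in> vec m" by (simp add: vec_def vzero_def)
  have "br (scal 0 vzero) y = scal 0 (br vzero y)" using a z unfolding lie_alg_def by blast
  moreover have "scal 0 vzero = vzero" by (simp add: scal_def vzero_def)
  ultimately show ?thesis by (simp add: scal_def vzero_def)
qed

lemma la_zero_r: "lie_alg m br \<Longrightarrow> y \<in> vec m \<Longrightarrow> br y vzero = vzero"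
proof -
  assume a: "lie_alg m br" "y \<in> vec m"
  have z: "vzero \<in> vec m" by (simp add: vec_def vzero_def)
  have "br y (scal 0 vzero) = scal 0 (br y vzero)" using a z unfolding lie_alg_def by blast
  moreover have "scal 0 vzero = vzero" by (simp add: scal_def vzero_def)
  ultimately show ?thesis by (simp add: scal_def vzero_def)
qed

lemma la_cl: "lie_alg m br \<Longrightarrow> x \<in> vec m \<Longrightarrow> y \<in> vec m \<Longrightarrow> br x y \<in> vec m"
  unfolding lie_alg_def by blast

lemma proj1_eq: "proj1 m1 = res1 m1" by (rule ext) (simp add: proj1_def res1_def)
lemma emb1_eq: "emb1 m1 = res1 m1" by (rule ext) (simp add: emb1_def res1_def)
lemma proj2_eq: "proj2 m1 m2 x = emb2 m1 m2 (res2 m1 m2 x)"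
  by (rule ext) (auto simp: proj2_def emb2_def res2_def)
lemma res1_res1[simp]: "res1 m1 (res1 m1 x) = res1 m1 x" by (simp add: res1_def fun_eq_iff)
lemma res1_vec[simp]: "res1 m1 x \<in> vec m1" by (simp add: res1_def vec_def)
lemma res1_id: "x \<in> vec m1 \<Longrightarrow> res1 m1 x = x" by (rule ext) (simp add: res1_def vec_def)
lemma res2_vec[simp]: "res2 m1 m2 x \<in> vec m2" by (simp add: res2_def vec_def)
lemma res2_emb2: "y \<in> vec m2 \<Longrightarrow> res2 m1 m2 (emb2 m1 m2 y) = y"
  by (rule ext) (simp add: res2_def emb2_def vec_def)
lemma res1_emb2[simp]: "res1 m1 (emb2 m1 m2 y) = vzero"
  by (rule ext) (simp add: res1_def emb2_def vzero_def)
lemma res2_res1[simp]: "res2 m1 m2 (res1 m1 y) = vzero"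
  by (rule ext) (simp add: res1_def res2_def vzero_def)
lemma res1_vadd[simp]: "res1 m (vadd a b) = vadd (res1 m a) (res1 m b)"
  by (rule ext) (simp add: res1_def vadd_def)
lemma res2_vadd[simp]: "res2 m1 m2 (vadd a b) = vadd (res2 m1 m2 a) (res2 m1 m2 b)"
  by (rule ext) (simp add: res2_def vadd_def)
lemma emb2_vadd[simp]: "emb2 m1 m2 (vadd a b) = vadd (emb2 m1 m2 a) (emb2 m1 m2 b)"
  by (rule ext) (simp add: emb2_def vadd_def)
lemma res1_scal[simp]: "res1 m (scal c a) = scal c (res1 m a)"
  by (rule ext) (simp add: res1_def scal_def)
lemma res2_scal[simp]: "res2 m1 m2 (scal c a) = scal c (res2 m1 m2 a)"
  by (rule ext) (simp add: res2_def scal_def)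
lemma emb2_scal[simp]: "emb2 m1 m2 (scal c a) = scal c (emb2 m1 m2 a)"
  by (rule ext) (simp add: emb2_def scal_def)
lemma res1_vzero[simp]: "res1 m vzero = vzero" by (rule ext) (simp add: res1_def vzero_def)
lemma res2_vzero[simp]: "res2 m1 m2 vzero = vzero" by (rule ext) (simp add: res2_def vzero_def)
lemma emb2_vzero[simp]: "emb2 m1 m2 vzero = vzero" by (rule ext) (simp add: emb2_def vzero_def)
lemma vadd_vzero[simp]: "vadd a vzero = a" "vadd vzero a = a" by (simp_all add: vadd_def vzero_def)
lemma scal_vzero[simp]: "scal c vzero = vzero" by (simp add: scal_def vzero_def)
lemma res1_vecN: "m1 \<le> N \<Longrightarrow> res1 m1 x \<in> vec N" by (simp add: res1_def vec_def)
lemma emb2_vecN: "m1 + m2 \<le> N \<Longrightarrow> emb2 m1 m2 x \<in> vec N" by (simp add: emb2_def vec_def)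
lemma proj3_vecN: "proj3 m1 m2 N x \<in> vec N" by (simp add: proj3_def vec_def)

lemma P_vec: "prod_gen m1 n1 br1 m2 n2 br2 u v \<in> vec (m1 + m2 + n1 * n2)"
  by (simp add: prod_gen_def vec_def vadd_def emb1_def emb2_def)

lemma res1_P: "lie_alg m1 br1 \<Longrightarrow>
  res1 m1 (prod_gen m1 n1 br1 m2 n2 br2 u v) = br1 (res1 m1 u) (res1 m1 v)"
proof (rule ext)
  fix k assume a: "lie_alg m1 br1"
  have "br1 (res1 m1 u) (res1 m1 v) \<in> vec m1" using la_cl[OF a] by simp
  then show "res1 m1 (prod_gen m1 n1 br1 m2 n2 br2 u v) k = br1 (res1 m1 u) (res1 m1 v) k"
    by (auto simp: res1_def prod_gen_def vadd_def emb1_def emb2_def vec_def)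
qed

lemma res2_P: "lie_alg m2 br2 \<Longrightarrow>
  res2 m1 m2 (prod_gen m1 n1 br1 m2 n2 br2 u v) = br2 (res2 m1 m2 u) (res2 m1 m2 v)"
proof (rule ext)
  fix k assume a: "lie_alg m2 br2"
  have "br2 (res2 m1 m2 u) (res2 m1 m2 v) \<in> vec m2" using la_cl[OF a] by simp
  then show "res2 m1 m2 (prod_gen m1 n1 br1 m2 n2 br2 u v) k = br2 (res2 m1 m2 u) (res2 m1 m2 v) k"
    by (auto simp: res2_def prod_gen_def vadd_def emb1_def emb2_def vec_def)
qed

lemma divlt: "t < n1 * (n2::nat) \<Longrightarrow> t div n2 < n1 \<and> t mod n2 < n2"
  by (metis div_less_iff_less_mult mod_less_divisor mult.commute mult_zero_right neq0_conv not_less_zero)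

lemma P_central:
  assumes l1: "lie_alg m1 br1" and l2: "lie_alg m2 br2" and n: "n1 \<le> m1" "n2 \<le> m2"
    and u1: "res1 m1 u = vzero" and u2: "res2 m1 m2 u = vzero"
  shows "prod_gen m1 n1 br1 m2 n2 br2 u v = vzero \<and> prod_gen m1 n1 br1 m2 n2 br2 v u = vzero"
proof -
  have uk: "u k = 0" if "k < m1 + m2" for k
  proof (cases "k < m1")
    case True then show ?thesis using fun_cong[OF u1, of k] by (simp add: res1_def vzero_def)
  next
    case False then show ?thesis using fun_cong[OF u2, of "k - m1"] that
      by (simp add: res2_def vzero_def split: if_splits)
  qed
  have z1: "br1 vzero (res1 m1 v) = vzero" "br1 (res1 m1 v) vzero = vzero"
    using la_zero_l[OF l1] la_zero_r[OF l1] by auto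
  have z2: "br2 vzero (res2 m1 m2 v) = vzero" "br2 (res2 m1 m2 v) vzero = vzero"
    using la_zero_l[OF l2] la_zero_r[OF l2] by auto
  have cr: "u ((k - (m1+m2)) div n2) = 0 \<and> u (m1 + (k - (m1+m2)) mod n2) = 0"
    if "m1 + m2 \<le> k" "k < m1 + m2 + n1 * n2" for k
  proof -
    have "k - (m1+m2) < n1 * n2" using that by linarith
    then have d: "(k - (m1 + m2)) div n2 < n1" "(k - (m1 + m2)) mod n2 < n2" using divlt by auto
    show ?thesis using uk d n by (metis add_less_mono1 le_add1 less_le_trans nat_add_left_cancel_less)
  qed
  show ?thesis
    unfolding prod_gen_def u1 u2 z1 z2
    by (auto simp: vadd_def vzero_def emb1_def emb2_def Let_def cr fun_eq_iff)
qed

lemma P_E1E1: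
  assumes l1: "lie_alg m1 br1" and l2: "lie_alg m2 br2" and a: "a \<in> vec m1" "b \<in> vec m1"
  shows "prod_gen m1 n1 br1 m2 n2 br2 (res1 m1 a) (res1 m1 b) = res1 m1 (br1 a b)"
proof -
  have z2: "br2 vzero vzero = vzero" using la_zero_l[OF l2] by (simp add: vec_def vzero_def)
  have c: "br1 a b \<in> vec m1" using la_cl[OF l1 a] .
  show ?thesis unfolding prod_gen_def res2_res1 z2 unfolding res1_id[OF a(1)] res1_id[OF a(2)] res1_id[OF c]
    using a c by (auto simp: vadd_def vzero_def emb1_def emb2_def Let_def fun_eq_iff vec_def)
qed

lemma P_E2E2:
  assumes l1: "lie_alg m1 br1" and l2: "lie_alg m2 br2" and a: "a \<in> vec m2" "b \<in> vec m2"
    and n: "n1 \<le> m1"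
  shows "prod_gen m1 n1 br1 m2 n2 br2 (emb2 m1 m2 a) (emb2 m1 m2 b) = emb2 m1 m2 (br2 a b)"
proof -
  have z1: "br1 vzero vzero = vzero" using la_zero_l[OF l1] by (simp add: vec_def vzero_def)
  have e: "emb1 m1 vzero = vzero" by (simp add: emb1_def vzero_def)
  have cr: "(k - (m1+m2)) div n2 < m1"
    if "m1 + m2 \<le> k" "k < m1 + m2 + n1 * n2" for k
  proof -
    have "k - (m1+m2) < n1 * n2" using that by linarith
    then show ?thesis using divlt n by fastforce
  qed
  show ?thesis unfolding prod_gen_def res1_emb2 z1 e res2_emb2[OF a(1)] res2_emb2[OF a(2)]
    by (auto simp: vadd_def vzero_def emb2_def Let_def fun_eq_iff) (use cr in fastforce)+
qed

lemma emb2_res2_emb2[simp]: "emb2 m1 m2 (res2 m1 m2 (emb2 m1 m2 y)) = emb2 m1 m2 y"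
  by (rule ext) (auto simp: emb2_def res2_def)
lemma res2_emb2_res2[simp]: "res2 m1 m2 (emb2 m1 m2 (res2 m1 m2 y)) = res2 m1 m2 y"
  by (rule ext) (simp add: emb2_def res2_def)
lemma res1_proj3[simp]: "res1 m1 (proj3 m1 m2 N z) = vzero"
  by (rule ext) (simp add: res1_def proj3_def vzero_def)
lemma res2_proj3[simp]: "res2 m1 m2 (proj3 m1 m2 N z) = vzero"
  by (rule ext) (simp add: res2_def proj3_def vzero_def)

lemma scal_vec: "x \<in> vec m \<Longrightarrow> scal c x \<in> vec m" by (simp add: scal_def vec_def)

theorem mainTheorem9:
  fixes m1 n1 m2 n2 :: nat and br1 br2 :: bracket and D :: "cvec \<Rightarrow> cvec"
  assumes g1: "nilpotent_lie m1 br1" "nonabelian m1 br1" "adapted m1 br1 n1"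
      and g2: "nilpotent_lie m2 br2" "nonabelian m2 br2" "adapted m2 br2 n2"
      and D: "lie_der (m1 + m2 + n1 * n2) (prod_gen m1 n1 br1 m2 n2 br2) D"
  defines "N \<equiv> m1 + m2 + n1 * n2"
  shows
    "lie_der m1 br1 (\<lambda>y. res1 m1 (proj1 m1 (D (proj1 m1 (emb1 m1 y)))))
     \<and> lie_der m2 br2 (\<lambda>y. res2 m1 m2 (proj2 m1 m2 (D (proj2 m1 m2 (emb2 m1 m2 y)))))
     \<and> (\<forall>x\<in>derived m1 br1. proj2 m1 m2 (D (proj1 m1 (emb1 m1 x))) = vzero)
     \<and> (\<forall>x\<in>derived m2 br2. proj1 m1 (D (proj2 m1 m2 (emb2 m1 m2 x))) = vzero)
     \<and> (\<forall>z\<in>vec N. res1 m1 (proj1 m1 (D (proj3 m1 m2 N z))) \<in> center m1 br1)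
     \<and> (\<forall>z\<in>vec N. res2 m1 m2 (proj2 m1 m2 (D (proj3 m1 m2 N z))) \<in> center m2 br2)
     \<and> (\<forall>y\<in>vec m2. res1 m1 (proj1 m1 (D (proj2 m1 m2 (emb2 m1 m2 y)))) \<in> Tset m1 br1)
     \<and> (\<forall>x\<in>vec m1. res2 m1 m2 (proj2 m1 m2 (D (proj1 m1 (emb1 m1 x)))) \<in> Tset m2 br2)"
proof -
  let ?P = "prod_gen m1 n1 br1 m2 n2 br2"
  have l1: "lie_alg m1 br1" using g1 by (simp add: nilpotent_lie_def)
  have l2: "lie_alg m2 br2" using g2 by (simp add: nilpotent_lie_def)
  have n1: "n1 \<le> m1" using g1 by (simp add: adapted_def)
  have n2: "n2 \<le> m2" using g2 by (simp add: adapted_def)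
  have DN: "lie_der N ?P D" using D by (simp add: N_def)
  have Dvec: "\<And>x. x \<in> vec N \<Longrightarrow> D x \<in> vec N" using DN unfolding lie_der_def by blast
  have Dadd: "\<And>x y. x \<in> vec N \<Longrightarrow> y \<in> vec N \<Longrightarrow> D (vadd x y) = vadd (D x) (D y)"
    using DN unfolding lie_der_def by blast
  have Dscal: "\<And>c x. x \<in> vec N \<Longrightarrow> D (scal c x) = scal c (D x)"
    using DN unfolding lie_der_def by blast
  have Dl: "\<And>x y. x \<in> vec N \<Longrightarrow> y \<in> vec N \<Longrightarrow> D (?P x y) = vadd (?P (D x) y) (?P x (D y))"
    using DN unfolding lie_der_def by blast
  have z0: "vzero \<in> vec N" by (simp add: vec_def vzero_def)
  have D0: "D vzero = vzero"
    using Dscal[OF z0, of 0] by (simp add: scal_def vzero_def)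
  have r1N: "\<And>x. res1 m1 x \<in> vec N" by (rule res1_vecN) (simp add: N_def)
  have e2N: "\<And>x. emb2 m1 m2 x \<in> vec N" by (rule emb2_vecN) (simp add: N_def)
  have PN: "\<And>u v. ?P u v \<in> vec N" unfolding N_def by (rule P_vec)
  have r1P: "\<And>u v. res1 m1 (?P u v) = br1 (res1 m1 u) (res1 m1 v)" by (rule res1_P[OF l1])
  have r2P: "\<And>u v. res2 m1 m2 (?P u v) = br2 (res2 m1 m2 u) (res2 m1 m2 v)" by (rule res2_P[OF l2])
  have PC: "\<And>u v. res1 m1 u = vzero \<Longrightarrow> res2 m1 m2 u = vzero \<Longrightarrow> ?P u v = vzero \<and> ?P v u = vzero"
    by (rule P_central[OF l1 l2 n1 n2])
  have b1l: "\<And>y. y \<in> vec m1 \<Longrightarrow> br1 vzero y = vzero" by (rule la_zero_l[OF l1])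
  have b1r: "\<And>y. y \<in> vec m1 \<Longrightarrow> br1 y vzero = vzero" by (rule la_zero_r[OF l1])
  have b2l: "\<And>y. y \<in> vec m2 \<Longrightarrow> br2 vzero y = vzero" by (rule la_zero_l[OF l2])
  have b2r: "\<And>y. y \<in> vec m2 \<Longrightarrow> br2 y vzero = vzero" by (rule la_zero_r[OF l2])

  have part1: "lie_der m1 br1 (\<lambda>y. res1 m1 (proj1 m1 (D (proj1 m1 (emb1 m1 y)))))"
  proof -
    have "(\<lambda>y. res1 m1 (proj1 m1 (D (proj1 m1 (emb1 m1 y))))) = (\<lambda>y. res1 m1 (D (res1 m1 y)))"
      by (simp add: proj1_eq emb1_eq)
    moreover have "lie_der m1 br1 (\<lambda>y. res1 m1 (D (res1 m1 y)))"
      unfolding lie_der_def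
    proof (intro conjI ballI allI impI)
      fix x y assume x: "x \<in> vec m1" and y: "y \<in> vec m1"
      show "res1 m1 (D (res1 m1 (vadd x y))) = vadd (res1 m1 (D (res1 m1 x))) (res1 m1 (D (res1 m1 y)))"
        by (simp add: Dadd r1N)
      have "res1 m1 (D (res1 m1 (br1 x y))) = res1 m1 (D (?P (res1 m1 x) (res1 m1 y)))"
        using P_E1E1[OF l1 l2 x y] by simp
      also have "\<dots> = vadd (br1 (res1 m1 (D (res1 m1 x))) y) (br1 x (res1 m1 (D (res1 m1 y))))"
        by (simp add: Dl r1N r1P, simp add: res1_id x y)
      finally show "res1 m1 (D (res1 m1 (br1 x y))) = vadd (br1 (res1 m1 (D (res1 m1 x))) y) (br1 x (res1 m1 (D (res1 m1 y))))" .
    next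
      fix c x assume "x \<in> vec m1"
      show "res1 m1 (D (res1 m1 (scal c x))) = scal c (res1 m1 (D (res1 m1 x)))"
        by (simp add: Dscal r1N)
    qed simp
    ultimately show ?thesis by simp
  qed

  have part2: "lie_der m2 br2 (\<lambda>y. res2 m1 m2 (proj2 m1 m2 (D (proj2 m1 m2 (emb2 m1 m2 y)))))"
  proof -
    have "(\<lambda>y. res2 m1 m2 (proj2 m1 m2 (D (proj2 m1 m2 (emb2 m1 m2 y))))) = (\<lambda>y. res2 m1 m2 (D (emb2 m1 m2 y)))"
      by (simp add: proj2_eq)
    moreover have "lie_der m2 br2 (\<lambda>y. res2 m1 m2 (D (emb2 m1 m2 y)))"
      unfolding lie_der_def
    proof (intro conjI ballI allI impI)
      fix x y assume x: "x \<in> vec m2" and y: "y \<in> vec m2"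
      show "res2 m1 m2 (D (emb2 m1 m2 (vadd x y))) = vadd (res2 m1 m2 (D (emb2 m1 m2 x))) (res2 m1 m2 (D (emb2 m1 m2 y)))"
        by (simp add: Dadd e2N)
      have "res2 m1 m2 (D (emb2 m1 m2 (br2 x y))) = res2 m1 m2 (D (?P (emb2 m1 m2 x) (emb2 m1 m2 y)))"
        using P_E2E2[OF l1 l2 x y n1] by simp
      also have "\<dots> = vadd (br2 (res2 m1 m2 (D (emb2 m1 m2 x))) y) (br2 x (res2 m1 m2 (D (emb2 m1 m2 y))))"
        by (simp add: Dl e2N r2P res2_emb2 x y)
      finally show "res2 m1 m2 (D (emb2 m1 m2 (br2 x y))) = vadd (br2 (res2 m1 m2 (D (emb2 m1 m2 x))) y) (br2 x (res2 m1 m2 (D (emb2 m1 m2 y))))" .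
    next
      fix c x assume "x \<in> vec m2"
      show "res2 m1 m2 (D (emb2 m1 m2 (scal c x))) = scal c (res2 m1 m2 (D (emb2 m1 m2 x)))"
        by (simp add: Dscal e2N)
    qed simp
    ultimately show ?thesis by simp
  qed

  have part3: "\<forall>x\<in>derived m1 br1. proj2 m1 m2 (D (proj1 m1 (emb1 m1 x))) = vzero"
  proof
    fix x assume "x \<in> derived m1 br1"
    then have "x \<in> cspan {br1 a b | a b. a \<in> vec m1 \<and> b \<in> vec m1}" by (simp add: derived_def)
    then have "res2 m1 m2 (D (res1 m1 x)) = vzero"
    proof induction
      case cspan_zero then show ?case by (simp add: D0)
    next
      case (cspan_step s v c)
      then obtain a b where s: "s = br1 a b" "a \<in> vec m1" "b \<in> vec m1" by blast
      have "res2 m1 m2 (D (res1 m1 s)) = res2 m1 m2 (D (?P (res1 m1 a) (res1 m1 b)))"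
        using P_E1E1[OF l1 l2 s(2,3)] s(1) by simp
      also have "\<dots> = vzero" by (simp add: Dl r1N r2P b2l b2r)
      finally have "res2 m1 m2 (D (res1 m1 s)) = vzero" .
      then show ?case using cspan_step by (simp add: Dadd Dscal r1N scal_vec)
    qed
    then show "proj2 m1 m2 (D (proj1 m1 (emb1 m1 x))) = vzero" by (simp add: proj2_eq proj1_eq emb1_eq)
  qed

  have part4: "\<forall>x\<in>derived m2 br2. proj1 m1 (D (proj2 m1 m2 (emb2 m1 m2 x))) = vzero"
  proof
    fix x assume "x \<in> derived m2 br2"
    then have "x \<in> cspan {br2 a b | a b. a \<in> vec m2 \<and> b \<in> vec m2}" by (simp add: derived_def)
    then have "res1 m1 (D (emb2 m1 m2 x)) = vzero"
    proof induction
      case cspan_zero then show ?case by (simp add: D0)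
    next
      case (cspan_step s v c)
      then obtain a b where s: "s = br2 a b" "a \<in> vec m2" "b \<in> vec m2" by blast
      have "res1 m1 (D (emb2 m1 m2 s)) = res1 m1 (D (?P (emb2 m1 m2 a) (emb2 m1 m2 b)))"
        using P_E2E2[OF l1 l2 s(2,3) n1] s(1) by simp
      also have "\<dots> = vzero" by (simp add: Dl e2N r1P b1l b1r)
      finally have "res1 m1 (D (emb2 m1 m2 s)) = vzero" .
      then show ?case using cspan_step by (simp add: Dadd Dscal e2N scal_vec)
    qed
    then show "proj1 m1 (D (proj2 m1 m2 (emb2 m1 m2 x))) = vzero" by (simp add: proj2_eq proj1_eq)
  qed

  have part5: "\<forall>z\<in>vec N. res1 m1 (proj1 m1 (D (proj3 m1 m2 N z))) \<in> center m1 br1"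
  proof
    fix z assume "z \<in> vec N"
    define Z where "Z = proj3 m1 m2 N z"
    have ZN: "Z \<in> vec N" unfolding Z_def by (rule proj3_vecN)
    have Zc: "\<And>v. ?P Z v = vzero" using PC by (simp add: Z_def)
    have "br1 (res1 m1 (D Z)) y = vzero" if y: "y \<in> vec m1" for y
    proof -
      have "vzero = D (?P Z (res1 m1 y))" by (simp add: Zc D0)
      also have "\<dots> = ?P (D Z) (res1 m1 y)" using Dl[OF ZN r1N] by (simp add: Zc)
      finally have "res1 m1 vzero = res1 m1 (?P (D Z) (res1 m1 y))" by simp
      then show ?thesis by (simp add: r1P res1_id y)
    qed
    then show "res1 m1 (proj1 m1 (D (proj3 m1 m2 N z))) \<in> center m1 br1"
      by (simp add: center_def proj1_eq Z_def[symmetric])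
  qed

  have part6: "\<forall>z\<in>vec N. res2 m1 m2 (proj2 m1 m2 (D (proj3 m1 m2 N z))) \<in> center m2 br2"
  proof
    fix z assume "z \<in> vec N"
    define Z where "Z = proj3 m1 m2 N z"
    have ZN: "Z \<in> vec N" unfolding Z_def by (rule proj3_vecN)
    have Zc: "\<And>v. ?P Z v = vzero" using PC by (simp add: Z_def)
    have "br2 (res2 m1 m2 (D Z)) y = vzero" if y: "y \<in> vec m2" for y
    proof -
      have "vzero = D (?P Z (emb2 m1 m2 y))" by (simp add: Zc D0)
      also have "\<dots> = ?P (D Z) (emb2 m1 m2 y)" using Dl[OF ZN e2N] by (simp add: Zc)
      finally have "res2 m1 m2 vzero = res2 m1 m2 (?P (D Z) (emb2 m1 m2 y))" by simp
      then show ?thesis by (simp add: r2P res2_emb2 y)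
    qed
    then show "res2 m1 m2 (proj2 m1 m2 (D (proj3 m1 m2 N z))) \<in> center m2 br2"
      by (simp add: center_def proj2_eq Z_def[symmetric])
  qed

  have part7: "\<forall>y\<in>vec m2. res1 m1 (proj1 m1 (D (proj2 m1 m2 (emb2 m1 m2 y)))) \<in> Tset m1 br1"
  proof
    fix y assume y: "y \<in> vec m2"
    define W where "W = emb2 m1 m2 y"
    have WN: "W \<in> vec N" unfolding W_def by (rule e2N)
    have "br1 (br1 (res1 m1 (D W)) x) x' = vzero" if x: "x \<in> vec m1" and x': "x' \<in> vec m1" for x x'
    proof -
      define C where "C = ?P W (res1 m1 x)"
      have CN: "C \<in> vec N" unfolding C_def by (rule PN)
      have Cc: "\<And>v. ?P C v = vzero" using PC unfolding C_def
        by (simp add: r1P r2P W_def b1l b2r y)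
      have "vzero = D (?P C (res1 m1 x'))" by (simp add: Cc D0)
      also have "\<dots> = ?P (D C) (res1 m1 x')" using Dl[OF CN r1N] by (simp add: Cc)
      finally have "res1 m1 vzero = res1 m1 (?P (D C) (res1 m1 x'))" by simp
      then have a: "br1 (res1 m1 (D C)) x' = vzero" by (simp add: r1P res1_id x')
      have "res1 m1 (D C) = br1 (res1 m1 (D W)) x"
        unfolding C_def using Dl[OF WN r1N, of x] by (simp add: r1P W_def b1l, simp add: res1_id x)
      then show ?thesis using a by simp
    qed
    then show "res1 m1 (proj1 m1 (D (proj2 m1 m2 (emb2 m1 m2 y)))) \<in> Tset m1 br1"
      by (simp add: Tset_def center_def proj1_eq proj2_eq W_def la_cl[OF l1])
  qed

  have part8: "\<forall>x\<in>vec m1. res2 m1 m2 (proj2 m1 m2 (D (proj1 m1 (emb1 m1 x)))) \<in> Tset m2 br2"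
  proof
    fix x assume x: "x \<in> vec m1"
    define W where "W = res1 m1 x"
    have WN: "W \<in> vec N" unfolding W_def by (rule r1N)
    have "br2 (br2 (res2 m1 m2 (D W)) y) y' = vzero" if y: "y \<in> vec m2" and y': "y' \<in> vec m2" for y y'
    proof -
      define C where "C = ?P W (emb2 m1 m2 y)"
      have CN: "C \<in> vec N" unfolding C_def by (rule PN)
      have Cc: "\<And>v. ?P C v = vzero" using PC unfolding C_def
        by (simp add: r1P r2P W_def b1r b2l y res2_emb2)
      have "vzero = D (?P C (emb2 m1 m2 y'))" by (simp add: Cc D0)
      also have "\<dots> = ?P (D C) (emb2 m1 m2 y')" using Dl[OF CN e2N] by (simp add: Cc)
      finally have "res2 m1 m2 vzero = res2 m1 m2 (?P (D C) (emb2 m1 m2 y'))" by simp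
      then have a: "br2 (res2 m1 m2 (D C)) y' = vzero" by (simp add: r2P res2_emb2 y')
      have "res2 m1 m2 (D C) = br2 (res2 m1 m2 (D W)) y"
        unfolding C_def using Dl[OF WN e2N, of y] by (simp add: r2P W_def res2_emb2 y b2l)
      then show ?thesis using a by simp
    qed
    then show "res2 m1 m2 (proj2 m1 m2 (D (proj1 m1 (emb1 m1 x)))) \<in> Tset m2 br2"
      by (simp add: Tset_def center_def proj1_eq emb1_eq proj2_eq W_def la_cl[OF l2] res2_emb2)
  qed

  show ?thesis using part1 part2 part3 part4 part5 part6 part7 part8 by blast
qed

end
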